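(* Let $G$ be a graph with a hole cover $\mathcal C$ satisfying the NC property in $G$. If $K\subseteq V(G)$ is a clique in $\widehat G(\mathcal C)$ but not a clique in $G$, then there is a vertex $u\in K\cap\mathcal C$ such that $K\setminus\{u\}$ is a clique in $G$.
   Context: All graphs are finite and simple. A hole of $G$ is an induced cycle of length at least $4$; $\mathcal H(G)$ is the set of holes of $G$ and $\mathcal H(G,u)$ the set of holes containing $u$. A hole cover of $G$ is a nonempty $X\subseteq V(G)$ meeting every hole. A vertex $u$ satisfies the NC property in $G$ if there are no holes $H\in\mathcal H(G,u)$, $H'\in\mathcal H(G)\setminus\mathcal H(G,u)$ sharing two consecutive edges (two distinct edges with a common end vertex lying on both). A set $\mathcal C$ satisfies the NC property in $G$ if each of its vertices does and every hole contains at most one vertex of $\mathcal C$. Locally chordalizing all holes in $\mathcal H(G,u)$ by $u$ means adding all edges $uw$ with $w\ne u$ lying on some hole in $\mathcal H(G,u)$. For a hole cover $\mathcal C=\{u_1,\dots,u_k\}$ satisfying the NC property in $G$, set $G_0=G$, let $G_i$ be obtained from $G_{i-1}$ by locally chordalizing all holes in $\mathcal H(G_{i-1},u_i)$ by $u_i$, and put $\widehat G(\mathcal C)=G_k$ (this graph is chordal and independent of the ordering of $\mathcal C$). *)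

theory Defs
  imports Main
begin

definition graph :: "'a set \<Rightarrow> ('a \<Rightarrow> 'a \<Rightarrow> bool) \<Rightarrow> bool" where
  "graph V E \<longleftrightarrow> finite V \<and> (\<forall>x y. E x y \<longrightarrow> x \<in> V \<and> y \<in> V)
     \<and> (\<forall>x y. E x y \<longrightarrow> E y x) \<and> (\<forall>x. \<not> E x x)"

text \<open>A hole (induced cycle of length at least 4), identified with its vertex set H:
  the induced subgraph on H is connected and 2-regular, with at least 4 vertices.\<close>
definition hole :: "'a set \<Rightarrow> ('a \<Rightarrow> 'a \<Rightarrow> bool) \<Rightarrow> 'a set \<Rightarrow> bool" where
  "hole V E H \<longleftrightarrow> H \<subseteq> V \<and> finite H \<and> card H \<ge> 4
     \<and> (\<forall>x\<in>H. card {y\<in>H. E x y} = 2)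
     \<and> (\<forall>x\<in>H. \<forall>y\<in>H. (\<lambda>a b. E a b \<and> a \<in> H \<and> b \<in> H)\<^sup>*\<^sup>* x y)"

definition hole_cover :: "'a set \<Rightarrow> ('a \<Rightarrow> 'a \<Rightarrow> bool) \<Rightarrow> 'a set \<Rightarrow> bool" where
  "hole_cover V E X \<longleftrightarrow> X \<noteq> {} \<and> X \<subseteq> V \<and> (\<forall>H. hole V E H \<longrightarrow> H \<inter> X \<noteq> {})"

definition share_consec_edges :: "('a \<Rightarrow> 'a \<Rightarrow> bool) \<Rightarrow> 'a set \<Rightarrow> 'a set \<Rightarrow> bool" where
  "share_consec_edges E H H' \<longleftrightarrow>
     (\<exists>a b c. a \<noteq> c \<and> E a b \<and> E b c \<and> a \<in> H \<inter> H' \<and> b \<in> H \<inter> H' \<and> c \<in> H \<inter> H')"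

definition NC_vertex :: "'a set \<Rightarrow> ('a \<Rightarrow> 'a \<Rightarrow> bool) \<Rightarrow> 'a \<Rightarrow> bool" where
  "NC_vertex V E u \<longleftrightarrow> \<not> (\<exists>H H'. hole V E H \<and> u \<in> H \<and> hole V E H' \<and> u \<notin> H'
      \<and> share_consec_edges E H H')"

definition NC_set :: "'a set \<Rightarrow> ('a \<Rightarrow> 'a \<Rightarrow> bool) \<Rightarrow> 'a set \<Rightarrow> bool" where
  "NC_set V E C \<longleftrightarrow> (\<forall>u\<in>C. NC_vertex V E u) \<and> (\<forall>H. hole V E H \<longrightarrow> card (H \<inter> C) \<le> 1)"

definition local_chordalize :: "'a set \<Rightarrow> ('a \<Rightarrow> 'a \<Rightarrow> bool) \<Rightarrow> 'a \<Rightarrow> ('a \<Rightarrow> 'a \<Rightarrow> bool)" where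
  "local_chordalize V E u = (\<lambda>x y. E x y
     \<or> (x = u \<and> y \<noteq> u \<and> (\<exists>H. hole V E H \<and> u \<in> H \<and> y \<in> H))
     \<or> (y = u \<and> x \<noteq> u \<and> (\<exists>H. hole V E H \<and> u \<in> H \<and> x \<in> H)))"

text \<open>Edge relation of \<open>G-hat(C)\<close> for the ordering us of C (G_0 = G, G_i from G_(i-1)).\<close>
definition hat_edges :: "'a set \<Rightarrow> ('a \<Rightarrow> 'a \<Rightarrow> bool) \<Rightarrow> 'a list \<Rightarrow> ('a \<Rightarrow> 'a \<Rightarrow> bool)" where
  "hat_edges V E us = foldl (\<lambda>E' u. local_chordalize V E' u) E us"

definition clique :: "'a set \<Rightarrow> ('a \<Rightarrow> 'a \<Rightarrow> bool) \<Rightarrow> 'a set \<Rightarrow> bool" where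
  "clique V E K \<longleftrightarrow> K \<subseteq> V \<and> (\<forall>x\<in>K. \<forall>y\<in>K. x \<noteq> y \<longrightarrow> E x y)"

end

theory Submission imports Defs begin

definition ipath :: "('a \<Rightarrow> 'a \<Rightarrow> bool) \<Rightarrow> 'a list \<Rightarrow> bool" where
  "ipath E xs \<longleftrightarrow> distinct xs \<and>
     (\<forall>i<length xs. \<forall>j<length xs. E (xs!i) (xs!j) \<longleftrightarrow> (i = Suc j \<or> j = Suc i))"

definition rch :: "('a \<Rightarrow> 'a \<Rightarrow> bool) \<Rightarrow> 'a set \<Rightarrow> 'a \<Rightarrow> 'a \<Rightarrow> bool" where
  "rch E S = (\<lambda>a b. E a b \<and> a \<in> S \<and> b \<in> S)\<^sup>*\<^sup>*"

lemma graph_sym: "graph V E \<Longrightarrow> E x y \<Longrightarrow> E y x"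
  unfolding graph_def by blast
lemma graph_irr: "graph V E \<Longrightarrow> \<not> E x x"
  unfolding graph_def by blast
lemma graph_V1: "graph V E \<Longrightarrow> E x y \<Longrightarrow> x \<in> V"
  unfolding graph_def by blast
lemma graph_V2: "graph V E \<Longrightarrow> E x y \<Longrightarrow> y \<in> V"
  unfolding graph_def by blast
lemma graph_fin: "graph V E \<Longrightarrow> finite V"
  unfolding graph_def by blast

lemma rch_refl: "rch E S x x"
  unfolding rch_def by simp

lemma rch_trans: "rch E S x y \<Longrightarrow> rch E S y z \<Longrightarrow> rch E S x z"
  unfolding rch_def by (rule rtranclp_trans)

lemma rch_edge: "E x y \<Longrightarrow> x \<in> S \<Longrightarrow> y \<in> S \<Longrightarrow> rch E S x y"
  unfolding rch_def by (rule r_into_rtranclp) simp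

lemma rch_eq_or_edge: "x = y \<or> E x y \<Longrightarrow> x \<in> S \<Longrightarrow> y \<in> S \<Longrightarrow> rch E S x y"
  using rch_edge rch_refl by metis

lemma rch_sym:
  assumes "\<And>x y. E x y \<Longrightarrow> E y x" and "rch E S x y" shows "rch E S y x"
  using assms(2) unfolding rch_def
proof (induction rule: rtranclp_induct)
  case base then show ?case by simp
next
  case (step y z)
  then have "(\<lambda>a b. E a b \<and> a \<in> S \<and> b \<in> S) z y" using assms(1) by blast
  then show ?case using step(3) by (rule converse_rtranclp_into_rtranclp)
qed

lemma rch_sym_g: "graph V E \<Longrightarrow> rch E S x y \<Longrightarrow> rch E S y x"
  using rch_sym[of E S x y] graph_sym[of V E] by blast

lemma rch_mono: "S \<subseteq> S' \<Longrightarrow> rch E S x y \<Longrightarrow> rch E S' x y"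
  unfolding rch_def by (erule rtranclp_mono[THEN predicate2D, rotated]) blast

lemma rch_mem: "rch E S x y \<Longrightarrow> x \<in> S \<Longrightarrow> y \<in> S"
  unfolding rch_def by (induction rule: rtranclp_induct) auto

lemma rch_walk:
  assumes "rch E S x y" "x \<in> S"
  shows "\<exists>xs. successively E xs \<and> xs \<noteq> [] \<and> hd xs = x \<and> last xs = y \<and> set xs \<subseteq> S"
  using assms unfolding rch_def
proof (induction rule: rtranclp_induct)
  case base then show ?case by (intro exI[of _ "[x]"]) simp
next
  case (step y z)
  then obtain xs where xs: "successively E xs" "xs \<noteq> []" "hd xs = x" "last xs = y" "set xs \<subseteq> S"
    by blast
  show ?case
    by (rule exI[of _ "xs @ [z]"]) (use xs step(2) in \<open>auto simp: successively_append_iff\<close>)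
qed

lemma walk_rch:
  assumes "successively E xs" "xs \<noteq> []" "set xs \<subseteq> S"
  shows "rch E S (hd xs) (last xs)"
  using assms
proof (induction xs rule: rev_induct)
  case Nil then show ?case by simp
next
  case (snoc z xs)
  show ?case
  proof (cases "xs = []")
    case True then show ?thesis by (simp add: rch_refl)
  next
    case False
    have w: "successively E xs" "E (last xs) z"
      using snoc(2) False by (auto simp: successively_append_iff)
    have "rch E S (hd xs) (last xs)" using snoc False w by auto
    moreover have "rch E S (last xs) z"
      using w snoc(4) False by (intro rch_edge) auto
    ultimately show ?thesis using False by (auto intro: rch_trans)
  qed
qed

lemma seg_rch:
  assumes "successively E ys" "i \<le> j" "j < length ys" "\<And>k. i \<le> k \<Longrightarrow> k \<le> j \<Longrightarrow> ys!k \<in> S"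
  shows "rch E S (ys!i) (ys!j)"
  using assms(2,3,4)
proof (induction j)
  case 0 then show ?case by (simp add: rch_refl)
next
  case (Suc j)
  show ?case
  proof (cases "i = Suc j")
    case True then show ?thesis by (simp add: rch_refl)
  next
    case False
    then have "rch E S (ys!i) (ys!j)" using Suc by auto
    moreover have "rch E S (ys!j) (ys!Suc j)"
      using Suc False assms(1) by (intro rch_edge) (auto simp: successively_nth)
    ultimately show ?thesis by (rule rch_trans)
  qed
qed


lemma walk_to_ipath:
  assumes sym: "\<And>x y. E x y \<Longrightarrow> E y x" and irr: "\<And>x. \<not> E x x"
  shows "successively E xs \<Longrightarrow> xs \<noteq> [] \<Longrightarrow>
    \<exists>ys. ipath E ys \<and> ys \<noteq> [] \<and> hd ys = hd xs \<and> last ys = last xs \<and> set ys \<subseteq> set xs"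
proof (induction "length xs" arbitrary: xs rule: less_induct)
  case less
  note w = less(2)[unfolded successively_conv_nth]
  show ?case
  proof (cases "ipath E xs")
    case True then show ?thesis using less by blast
  next
    case False
    show ?thesis
    proof (cases "distinct xs")
      case False
      then obtain i j where ij: "i < j" "j < length xs" "xs!i = xs!j"
        by (metis distinct_conv_nth linorder_neqE_nat)
      define xs' where "xs' = take i xs @ drop j xs"
      have len: "length xs' < length xs" using ij by (simp add: xs'_def)
      have nn: "xs' \<noteq> []" using ij by (simp add: xs'_def)
      have sw: "successively E xs'"
        unfolding xs'_def successively_append_iff
      proof (intro conjI)
        show "successively E (take i xs)"
          unfolding successively_conv_nth using w ij by auto
        show "successively E (drop j xs)"
          unfolding successively_conv_nth using w ij by auto
        show "take i xs = [] \<or> drop j xs = [] \<or> E (last (take i xs)) (hd (drop j xs))"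
        proof (cases i)
          case 0 then show ?thesis by simp
        next
          case (Suc i')
          have "Suc i' < length xs" using ij Suc by simp
          then have "E (xs!i') (xs!Suc i')" using w by blast
          moreover have "last (take i xs) = xs!i'" using ij Suc
            by (simp add: take_Suc_conv_app_nth)
          moreover have "hd (drop j xs) = xs!j" using ij by (simp add: hd_drop_conv_nth)
          ultimately show ?thesis using ij Suc by metis
        qed
      qed
      have hd: "hd xs' = hd xs"
        using ij less(3) by (cases i) (auto simp: xs'_def hd_drop_conv_nth hd_conv_nth nth_append)
      have lst: "last xs' = last xs" using ij by (simp add: xs'_def)
      have st: "set xs' \<subseteq> set xs" unfolding xs'_def
        using set_drop_subset set_take_subset by (metis Un_least set_append)
      from less(1)[OF len sw nn] hd lst st show ?thesis by auto
    next
      case dist: True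
      then obtain i j where ij: "i < length xs" "j < length xs"
          "\<not> (E (xs!i) (xs!j) \<longleftrightarrow> (i = Suc j \<or> j = Suc i))"
        using False unfolding ipath_def by blast
      have "E (xs!i) (xs!j)"
        using ij w sym by (metis Suc_lessD)
      then have nc: "\<not> (i = Suc j \<or> j = Suc i)" using ij by blast
      have "i \<noteq> j" using \<open>E (xs!i) (xs!j)\<close> irr by auto
      then obtain a b where ab: "a < b" "b < length xs" "E (xs!a) (xs!b)" "b \<noteq> Suc a"
        using ij nc \<open>E (xs!i) (xs!j)\<close> sym by (metis linorder_neqE_nat)
      define xs' where "xs' = take (Suc a) xs @ drop b xs"
      have len: "length xs' < length xs" using ab by (simp add: xs'_def)
      have nn: "xs' \<noteq> []" using ab by (simp add: xs'_def)
      have sw: "successively E xs'"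
        unfolding xs'_def successively_append_iff
      proof (intro conjI)
        show "successively E (take (Suc a) xs)"
          unfolding successively_conv_nth using w ab by auto
        show "successively E (drop b xs)"
          unfolding successively_conv_nth using w ab by auto
        have "last (take (Suc a) xs) = xs!a" using ab
          by (simp add: take_Suc_conv_app_nth)
        moreover have "hd (drop b xs) = xs!b" using ab by (simp add: hd_drop_conv_nth)
        ultimately show "take (Suc a) xs = [] \<or> drop b xs = [] \<or> E (last (take (Suc a) xs)) (hd (drop b xs))"
          using ab by auto
      qed
      have hd: "hd xs' = hd xs"
        using ab less(3) by (auto simp: xs'_def hd_conv_nth nth_append)
      have lst: "last xs' = last xs" using ab by (simp add: xs'_def)
      have st: "set xs' \<subseteq> set xs" unfolding xs'_def
        using set_drop_subset set_take_subset by (metis Un_least set_append)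
      from less(1)[OF len sw nn] hd lst st show ?thesis by auto
    qed
  qed
qed

lemma rch_ipath:
  assumes sym: "\<And>x y. E x y \<Longrightarrow> E y x" and irr: "\<And>x. \<not> E x x"
    and "rch E S x y" "x \<in> S"
  shows "\<exists>ys. ipath E ys \<and> ys \<noteq> [] \<and> hd ys = x \<and> last ys = y \<and> set ys \<subseteq> S"
proof -
  obtain xs where xs: "successively E xs" "xs \<noteq> []" "hd xs = x" "last xs = y" "set xs \<subseteq> S"
    using rch_walk[OF assms(3,4)] by blast
  from walk_to_ipath[OF sym irr xs(1,2)] xs show ?thesis by blast
qed


lemma hole_alt:
  "hole V E H \<longleftrightarrow> H \<subseteq> V \<and> finite H \<and> card H \<ge> 4
     \<and> (\<forall>x\<in>H. card {y\<in>H. E x y} = 2) \<and> (\<forall>x\<in>H. \<forall>y\<in>H. rch E H x y)"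
  unfolding hole_def rch_def by simp

lemma card2I: "S = {a, b} \<Longrightarrow> a \<noteq> b \<Longrightarrow> card S = 2"
  by simp

lemma ipath_adj: "ipath E xs \<Longrightarrow> i < length xs \<Longrightarrow> j < length xs \<Longrightarrow>
   E (xs!i) (xs!j) \<longleftrightarrow> (i = Suc j \<or> j = Suc i)"
  unfolding ipath_def by blast

lemma ipath_distinct: "ipath E xs \<Longrightarrow> distinct xs"
  unfolding ipath_def by blast

lemma ipath_walk: "ipath E xs \<Longrightarrow> successively E xs"
  unfolding successively_conv_nth ipath_def by auto

lemma path_hole:
  assumes g: "graph V E" and ip: "ipath E zs" and len: "3 \<le> length zs" and sV: "set zs \<subseteq> V"
    and cV: "c \<in> V" and cn: "c \<notin> set zs" and e1: "E c (hd zs)" and e2: "E c (last zs)"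
    and int: "\<And>i. 0 < i \<Longrightarrow> i < length zs - 1 \<Longrightarrow> \<not> E c (zs!i)"
  shows "hole V E (insert c (set zs))"
proof -
  define n where "n = length zs"
  define H where "H = insert c (set zs)"
  have dist: "distinct zs" using ip ipath_distinct by blast
  have nn: "zs \<noteq> []" using len by auto
  have n3: "3 \<le> n" "0 < n" "n - 1 < n" "0 \<noteq> n - 1" "n - 2 < n" "n - 2 \<noteq> n - 1" "1 < n"
     using len n_def by linarith+
  have hd0: "hd zs = zs!0" using nn by (simp add: hd_conv_nth)
  have lastn: "last zs = zs!(n-1)" using nn by (simp add: last_conv_nth n_def)
  have ec: "E c (zs!i) \<longleftrightarrow> (i = 0 \<or> i = n - 1)" if "i < n" for i
  proof (cases "i = 0 \<or> i = n - 1")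
    case True then show ?thesis using e1 e2 hd0 lastn by auto
  next
    case False
    then have "0 < i" "i < length zs - 1" using that n_def by auto
    then show ?thesis using int[of i] False by auto
  qed
  have card: "card H = Suc n"
    using cn dist by (simp add: H_def n_def distinct_card)
  have deg_c: "card {y\<in>H. E c y} = 2"
  proof (rule card2I)
    show "{y\<in>H. E c y} = {zs!0, zs!(n-1)}"
    proof (intro set_eqI iffI)
      fix y assume "y \<in> {y\<in>H. E c y}"
      then have "y \<in> set zs" "E c y" using graph_irr[OF g] by (auto simp: H_def)
      then obtain i where "i < n" "y = zs!i" by (auto simp: in_set_conv_nth n_def)
      then show "y \<in> {zs!0, zs!(n-1)}" using ec \<open>E c y\<close> by auto
    next
      fix y assume "y \<in> {zs!0, zs!(n-1)}"
      moreover have "0 < length zs" "n - 1 < length zs" using len n_def by auto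
      then have "zs!0 \<in> set zs" "zs!(n-1) \<in> set zs" by (meson nth_mem)+
      moreover have "E c (zs!0)" "E c (zs!(n-1))" using ec[of 0] ec[of "n-1"] len n_def nn by auto
      ultimately show "y \<in> {y\<in>H. E c y}" by (auto simp: H_def)
    qed
    show "zs!0 \<noteq> zs!(n-1)" using dist n3 n_def by (simp add: nth_eq_iff_index_eq)
  qed
  have deg_z: "card {y\<in>H. E (zs!i) y} = 2" if i: "i < n" for i
  proof -
    have ez: "\<And>j. j < n \<Longrightarrow> E (zs!i) (zs!j) \<longleftrightarrow> (i = Suc j \<or> j = Suc i)"
      using ip i n_def ipath_adj by blast
    have ezc: "E (zs!i) c \<longleftrightarrow> (i = 0 \<or> i = n - 1)"
      using ec i graph_sym[OF g] by blast
    have zi: "zs!j = zs!k \<longleftrightarrow> j = k" if "j < n" "k < n" for j k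
      using dist that n_def by (simp add: nth_eq_iff_index_eq)
    have cz: "zs!j \<noteq> c" if "j < n" for j using cn that n_def by auto
    consider "i = 0" | "i = n - 1" | "0 < i" "i < n - 1" using i by linarith
    then show ?thesis
    proof cases
      case 1
      show ?thesis
      proof (rule card2I)
        show "{y\<in>H. E (zs!i) y} = {c, zs!1}"
        proof (intro set_eqI iffI)
          fix y assume y: "y \<in> {y\<in>H. E (zs!i) y}"
          show "y \<in> {c, zs!1}"
          proof (cases "y = c")
            case False
            then obtain j where "j < n" "y = zs!j" using y by (auto simp: H_def in_set_conv_nth n_def)
            then show ?thesis using y ez 1 by auto
          qed simp
        next
          fix y assume "y \<in> {c, zs!1}"
          then show "y \<in> {y\<in>H. E (zs!i) y}" using ez ezc 1 len n_def by (auto simp: H_def)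
        qed
        show "c \<noteq> zs!1" using cz[of 1] n3 by auto
      qed
    next
      case 2
      show ?thesis
      proof (rule card2I)
        show "{y\<in>H. E (zs!i) y} = {c, zs!(n-2)}"
        proof (intro set_eqI iffI)
          fix y assume y: "y \<in> {y\<in>H. E (zs!i) y}"
          show "y \<in> {c, zs!(n-2)}"
          proof (cases "y = c")
            case False
            then obtain j where "j < n" "y = zs!j" using y by (auto simp: H_def in_set_conv_nth n_def)
            then have "n - 1 = Suc j \<or> j = Suc (n - 1)" using y ez 2 by auto
            then have "j = n - 2" using \<open>j < n\<close> by arith
            then show ?thesis using \<open>y = zs!j\<close> by simp
          qed simp
        next
          fix y assume "y \<in> {c, zs!(n-2)}"
          moreover have "n - 1 = Suc (n - 2)" using n3 by linarith
          then have "E (zs!i) (zs!(n-2))" using ez[of "n-2"] 2 n3 by auto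
          ultimately show "y \<in> {y\<in>H. E (zs!i) y}" using ezc 2 len n_def
            by (auto simp: H_def)
        qed
        show "c \<noteq> zs!(n-2)" using cz[of "n-2"] n3 by auto
      qed
    next
      case 3
      show ?thesis
      proof (rule card2I)
        show "{y\<in>H. E (zs!i) y} = {zs!(i-1), zs!(i+1)}"
        proof (intro set_eqI iffI)
          fix y assume y: "y \<in> {y\<in>H. E (zs!i) y}"
          show "y \<in> {zs!(i-1), zs!(i+1)}"
          proof (cases "y = c")
            case False
            then obtain j where "j < n" "y = zs!j" using y by (auto simp: H_def in_set_conv_nth n_def)
            then show ?thesis using y ez 3 by auto
          next
            case True then show ?thesis using y ezc 3 by auto
          qed
        next
          fix y assume "y \<in> {zs!(i-1), zs!(i+1)}"
          then show "y \<in> {y\<in>H. E (zs!i) y}" using ez 3 n_def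
            by (auto simp: H_def)
        qed
        show "zs!(i-1) \<noteq> zs!(i+1)" using zi 3 by auto
      qed
    qed
  qed
  have reach: "rch E H c y" if yH: "y \<in> H" for y
  proof (cases "y = c")
    case True then show ?thesis by (simp add: rch_refl)
  next
    case False
    then obtain i where i: "i < n" "y = zs!i" using yH by (auto simp: H_def in_set_conv_nth n_def)
    have "rch E H c (zs!0)" using e1 hd0 by (intro rch_edge) (auto simp: H_def nn)
    moreover have "rch E H (zs!0) (zs!i)"
      using ipath_walk[OF ip] i n_def by (intro seg_rch) (auto simp: H_def)
    ultimately show ?thesis using i rch_trans by metis
  qed
  show ?thesis unfolding hole_alt H_def[symmetric]
  proof (intro conjI ballI)
    show "H \<subseteq> V" using sV cV by (auto simp: H_def)
    show "finite H" by (simp add: H_def)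
    show "4 \<le> card H" using card len n_def by simp
    fix x assume x: "x \<in> H"
    show "card {y\<in>H. E x y} = 2"
    proof (cases "x = c")
      case True then show ?thesis using deg_c by simp
    next
      case False
      then obtain i where "i < n" "x = zs!i" using x by (auto simp: H_def in_set_conv_nth n_def)
      then show ?thesis using deg_z by simp
    qed
    fix y assume y: "y \<in> H"
    show "rch E H x y"
      using reach[OF x] reach[OF y] rch_sym graph_sym[OF g] rch_trans by metis
  qed
qed


lemma hole_closed:
  assumes h: "hole V E H" and "S \<subseteq> H" "x0 \<in> S"
    and cl: "\<And>x y. x \<in> S \<Longrightarrow> y \<in> H \<Longrightarrow> E x y \<Longrightarrow> y \<in> S"
  shows "S = H"
proof
  show "H \<subseteq> S"
  proof
    fix y assume y: "y \<in> H"
    have "rch E H x0 y" using h y assms(2,3) unfolding hole_alt by blast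
    then show "y \<in> S" unfolding rch_def
      by (induction rule: rtranclp_induct) (use assms(3) cl in auto)
  qed
qed fact

lemma hole_card2: "hole V E H \<Longrightarrow> x \<in> H \<Longrightarrow> card {y\<in>H. E x y} = 2"
  unfolding hole_alt by blast

lemma hole_sub_eq:
  assumes h1: "hole V E H1" and h2: "hole V E H2" and sub: "H1 \<subseteq> H2"
  shows "H1 = H2"
proof -
  have "H1 \<noteq> {}" using h1 unfolding hole_alt by auto
  then obtain x0 where "x0 \<in> H1" by blast
  show ?thesis
  proof (rule hole_closed[OF h2 sub \<open>x0 \<in> H1\<close>])
    fix x y assume x: "x \<in> H1" and y: "y \<in> H2" and e: "E x y"
    have "{y\<in>H1. E x y} \<subseteq> {y\<in>H2. E x y}" using sub by auto
    moreover have "finite {y\<in>H2. E x y}" using h2 unfolding hole_alt by auto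
    moreover have "card {y\<in>H1. E x y} = card {y\<in>H2. E x y}"
      using hole_card2[OF h1 x] hole_card2[OF h2] x sub by auto
    ultimately have "{y\<in>H1. E x y} = {y\<in>H2. E x y}" by (meson card_subset_eq)
    then show "y \<in> H1" using y e by blast
  qed
qed

lemma tool:
  assumes g: "graph V E" and ca: "E c a" and cb: "E c b" and ab: "a \<noteq> b" "\<not> E a b"
    and SV: "S \<subseteq> V" and aS: "a \<in> S" and bS: "b \<in> S" and cS: "c \<notin> S"
    and nc: "\<And>z. z \<in> S \<Longrightarrow> z \<noteq> a \<Longrightarrow> z \<noteq> b \<Longrightarrow> \<not> E c z"
    and r: "rch E S a b"
  shows "\<exists>zs. ipath E zs \<and> zs \<noteq> [] \<and> hd zs = a \<and> last zs = b \<and> set zs \<subseteq> S \<and> hole V E (insert c (set zs))"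
proof -
  obtain zs where zs: "ipath E zs" "zs \<noteq> []" "hd zs = a" "last zs = b" "set zs \<subseteq> S"
    using rch_ipath[of E S a b] graph_sym[OF g] graph_irr[OF g] r aS by blast
  have dist: "distinct zs" using zs(1) ipath_distinct by blast
  have h0: "zs!0 = a" using zs by (simp add: hd_conv_nth)
  have hl: "zs!(length zs - 1) = b" using zs by (simp add: last_conv_nth)
  have l1: "length zs \<noteq> 1" using zs ab h0 hl by auto
  have l2: "length zs \<noteq> 2"
  proof
    assume "length zs = 2"
    then have "E (zs!0) (zs!1)" using ipath_adj[OF zs(1), of 0 1] by simp
    then show False using h0 hl \<open>length zs = 2\<close> ab by simp
  qed
  have "length zs \<noteq> 0" using zs(2) by simp
  then have len: "3 \<le> length zs" using l1 l2 by presburger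
  have "hole V E (insert c (set zs))"
  proof (rule path_hole[OF g zs(1) len])
    show "set zs \<subseteq> V" using zs SV by auto
    show "c \<in> V" using graph_V1[OF g ca] .
    show "c \<notin> set zs" using zs cS by auto
    show "E c (hd zs)" "E c (last zs)" using zs ca cb by auto
    fix i assume i: "0 < i" "i < length zs - 1"
    have il: "i < length zs" "0 < length zs" "length zs - 1 < length zs" "i \<noteq> length zs - 1"
      using i by linarith+
    have "zs!i \<noteq> a" using dist il i h0 by (metis nth_eq_iff_index_eq less_not_refl2)
    moreover have "zs!i \<noteq> b" using dist il i hl by (metis nth_eq_iff_index_eq)
    moreover have "zs!i \<in> S" using zs il nth_mem by blast
    ultimately show "\<not> E c (zs!i)" using nc by blast
  qed
  then show ?thesis using zs by blast
qed


lemma even_degsum: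
  assumes sym: "\<And>x y. E x y \<Longrightarrow> E y x" and irr: "\<And>x. \<not> E x x"
  shows "finite S \<Longrightarrow> even (\<Sum>x\<in>S. card {y\<in>S. E x y})"
proof (induction S rule: finite_induct)
  case empty then show ?case by simp
next
  case (insert z S)
  have c1: "card {y\<in>insert z S. E z y} = card {y\<in>S. E z y}"
  proof -
    have "{y\<in>insert z S. E z y} = {y\<in>S. E z y}" using irr by auto
    then show ?thesis by simp
  qed
  have c2: "card {y\<in>insert z S. E x y} = card {y\<in>S. E x y} + (if E x z then 1 else 0)"
    if "x \<in> S" for x
  proof (cases "E x z")
    case True
    then have "{y\<in>insert z S. E x y} = insert z {y\<in>S. E x y}" by auto
    then show ?thesis using insert True by simp
  next
    case False
    then have "{y\<in>insert z S. E x y} = {y\<in>S. E x y}" by auto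
    then show ?thesis using False by simp
  qed
  have s3: "(\<Sum>x\<in>S. (if E x z then 1 else 0::nat)) = card {y\<in>S. E z y}"
  proof -
    have "(\<Sum>x\<in>S. (if E x z then 1 else 0::nat)) = card {x\<in>S. E x z}"
      using insert(1) by (simp add: sum.If_cases Int_def conj_commute)
    also have "{x\<in>S. E x z} = {y\<in>S. E z y}" using sym by blast
    finally show ?thesis .
  qed
  have "(\<Sum>x\<in>insert z S. card {y\<in>insert z S. E x y})
      = card {y\<in>S. E z y} + (\<Sum>x\<in>S. card {y\<in>insert z S. E x y})"
    using insert c1 by simp
  also have "(\<Sum>x\<in>S. card {y\<in>insert z S. E x y})
      = (\<Sum>x\<in>S. card {y\<in>S. E x y}) + (\<Sum>x\<in>S. (if E x z then 1 else 0::nat))"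
    using c2 by (simp add: sum.distrib)
  finally have "(\<Sum>x\<in>insert z S. card {y\<in>insert z S. E x y})
      = 2 * card {y\<in>S. E z y} + (\<Sum>x\<in>S. card {y\<in>S. E x y})" using s3 by simp
  then show ?case using insert(3) by simp
qed

lemma hole_minus_conn:
  assumes g: "graph V E" and h: "hole V E H" and u: "u \<in> H"
    and ab: "{y\<in>H. E u y} = {a, b}" "a \<noteq> b"
  shows "rch E (H - {u}) a b"
proof (rule ccontr)
  assume nr: "\<not> rch E (H - {u}) a b"
  have fin: "finite H" using h unfolding hole_alt by blast
  have aH: "a \<in> H" "E u a" using ab by blast+
  have bH: "b \<in> H" "E u b" using ab by blast+
  have au: "a \<noteq> u" using aH graph_irr[OF g] by auto
  define A where "A = {x. rch E (H - {u}) a x}"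
  have aA: "a \<in> A" by (simp add: A_def rch_refl)
  have AH: "A \<subseteq> H - {u}"
  proof
    fix x assume "x \<in> A"
    then have "rch E (H - {u}) a x" by (simp add: A_def)
    moreover have "a \<in> H - {u}" using aH au by simp
    ultimately show "x \<in> H - {u}" using rch_mem[of E "H - {u}" a x] by simp
  qed
  have uA: "u \<notin> A" using AH by auto
  have bA: "b \<notin> A" using nr by (simp add: A_def)
  define S where "S = insert u A"
  have finS: "finite S" using AH fin S_def finite_subset by auto
  have degA: "{y\<in>S. E x y} = {y\<in>H. E x y}" if x: "x \<in> A" for x
  proof
    show "{y\<in>S. E x y} \<subseteq> {y\<in>H. E x y}" using AH u by (auto simp: S_def)
    show "{y\<in>H. E x y} \<subseteq> {y\<in>S. E x y}"
    proof
      fix y assume y: "y \<in> {y\<in>H. E x y}"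
      show "y \<in> {y\<in>S. E x y}"
      proof (cases "y = u")
        case False
        have "rch E (H - {u}) x y" using y False x AH by (intro rch_edge) auto
        moreover have "rch E (H - {u}) a x" using x by (simp add: A_def)
        ultimately have "rch E (H - {u}) a y" using rch_trans[of E "H - {u}" a x y] by simp
        then have "y \<in> A" unfolding A_def by simp
        then show ?thesis using y by (simp add: S_def)
      qed (use y in \<open>simp add: S_def\<close>)
    qed
  qed
  have degu: "{y\<in>S. E u y} = {a}"
  proof
    show "{y\<in>S. E u y} \<subseteq> {a}"
    proof
      fix y assume y: "y \<in> {y\<in>S. E u y}"
      then have "y \<in> H" using AH u by (auto simp: S_def)
      then have "y \<in> {a, b}" using y ab(1) by blast
      then show "y \<in> {a}" using y bA graph_irr[OF g] by (auto simp: S_def)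
    qed
    show "{a} \<subseteq> {y\<in>S. E u y}" using aA aH by (simp add: S_def)
  qed
  have "(\<Sum>x\<in>S. card {y\<in>S. E x y}) = card {y\<in>S. E u y} + (\<Sum>x\<in>A. card {y\<in>S. E x y})"
    using finS uA by (simp add: S_def)
  also have "\<dots> = 1 + (\<Sum>x\<in>A. 2)"
  proof -
    have "card {y\<in>S. E x y} = 2" if "x \<in> A" for x
      using degA[OF that] hole_card2[OF h, of x] AH that by auto
    then have "(\<Sum>x\<in>A. card {y\<in>S. E x y}) = (\<Sum>x\<in>A. 2)" by (rule sum.cong[OF refl])
    then show ?thesis using degu by simp
  qed
  finally have "(\<Sum>x\<in>S. card {y\<in>S. E x y}) = 1 + 2 * card A" by simp
  moreover have "even (\<Sum>x\<in>S. card {y\<in>S. E x y})"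
    using even_degsum[of E S] graph_sym[OF g] graph_irr[OF g] finS by blast
  ultimately show False by simp
qed


definition upath :: "'a set \<Rightarrow> ('a \<Rightarrow> 'a \<Rightarrow> bool) \<Rightarrow> 'a \<Rightarrow> 'a list \<Rightarrow> bool" where
  "upath V E u ys \<longleftrightarrow> ipath E ys \<and> 3 \<le> length ys \<and> set ys \<subseteq> V \<and> u \<notin> set ys
     \<and> E u (hd ys) \<and> E u (last ys) \<and> (\<forall>i. 0 < i \<and> i < length ys - 1 \<longrightarrow> \<not> E u (ys!i))
     \<and> hole V E (insert u (set ys))"

lemma hole_upath:
  assumes g: "graph V E" and h: "hole V E H" and u: "u \<in> H"
  shows "\<exists>ys. upath V E u ys \<and> set ys = H - {u}"
proof -
  have "card {y\<in>H. E u y} = 2" using hole_card2[OF h u] .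
  then obtain a b where ab: "{y\<in>H. E u y} = {a, b}" "a \<noteq> b" by (auto simp: card_2_iff)
  have aH: "a \<in> H" "E u a" using ab by blast+
  have bH: "b \<in> H" "E u b" using ab by blast+
  have au: "a \<noteq> u" "b \<noteq> u" using aH bH graph_irr[OF g] by auto
  have HV: "H \<subseteq> V" using h unfolding hole_alt by blast
  have r: "rch E (H - {u}) a b" using hole_minus_conn[OF g h u ab] .
  obtain ys where ys: "ipath E ys" "ys \<noteq> []" "hd ys = a" "last ys = b" "set ys \<subseteq> H - {u}"
    using rch_ipath[of E "H - {u}" a b] graph_sym[OF g] graph_irr[OF g] r aH au by blast
  have dist: "distinct ys" using ys(1) ipath_distinct by blast
  have h0: "ys!0 = a" using ys by (simp add: hd_conv_nth)
  have hl: "ys!(length ys - 1) = b" using ys by (simp add: last_conv_nth)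
  have l1: "length ys \<noteq> 1" using ys ab h0 hl by auto
  have l2: "length ys \<noteq> 2"
  proof
    assume l: "length ys = 2"
    then have "E (ys!0) (ys!1)" using ipath_adj[OF ys(1), of 0 1] by simp
    then have eab: "E a b" using h0 hl l by simp
    have nbr: "{y\<in>H. E x y} = {p, q}" if "x \<in> H" "p \<in> H" "q \<in> H" "E x p" "E x q" "p \<noteq> q" for x p q
    proof -
      have "{p, q} \<subseteq> {y\<in>H. E x y}" using that by auto
      moreover have "finite {y\<in>H. E x y}" using h unfolding hole_alt by auto
      moreover have "card {p, q} = card {y\<in>H. E x y}" using hole_card2[OF h that(1)] that(6) by simp
      ultimately show ?thesis by (metis card_subset_eq)
    qed
    have "{u, a, b} = H"
    proof (rule hole_closed[OF h])
      show "{u, a, b} \<subseteq> H" using u aH bH by auto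
      show "u \<in> {u, a, b}" by simp
      fix x y assume x: "x \<in> {u, a, b}" and y: "y \<in> H" and e: "E x y"
      have "x = u \<or> x = a \<or> x = b" using x by simp
      then show "y \<in> {u, a, b}"
      proof (elim disjE)
        assume "x = u" then show ?thesis using ab y e by auto
      next
        assume xa: "x = a"
        have "{y\<in>H. E a y} = {u, b}"
          using nbr[of a u b] aH bH u eab au graph_sym[OF g, OF aH(2)] by auto
        then show ?thesis using xa y e by auto
      next
        assume xb: "x = b"
        have "{y\<in>H. E b y} = {u, a}"
          using nbr[of b u a] aH bH u eab au graph_sym[OF g] by auto
        then show ?thesis using xb y e by auto
      qed
    qed
    moreover have "card {u, a, b} \<le> 3" by (auto simp: card_insert_if)
    ultimately have "card H \<le> 3" by simp
    then show False using h unfolding hole_alt by simp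
  qed
  have "length ys \<noteq> 0" using ys(2) by simp
  then have len: "3 \<le> length ys" using l1 l2 by presburger
  have int: "\<not> E u (ys!i)" if i: "0 < i" "i < length ys - 1" for i
  proof
    assume e: "E u (ys!i)"
    have il: "i < length ys" "0 < length ys" "length ys - 1 < length ys" "i \<noteq> length ys - 1"
      using i by linarith+
    have "ys!i \<noteq> a" using dist il i h0 by (metis nth_eq_iff_index_eq less_not_refl2)
    moreover have "ys!i \<noteq> b" using dist il i hl by (metis nth_eq_iff_index_eq)
    moreover have "ys!i \<in> H" using ys il nth_mem by blast
    ultimately show False using e ab by blast
  qed
  have sV: "set ys \<subseteq> V" using ys HV by auto
  have un: "u \<notin> set ys" using ys by auto
  have hh: "hole V E (insert u (set ys))"
    using path_hole[OF g ys(1) len sV _ un] HV u aH bH ys int by auto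
  have "insert u (set ys) = H" using hole_sub_eq[OF hh h] u ys by auto
  then have st: "set ys = H - {u}" using un by auto
  have "upath V E u ys" unfolding upath_def using ys len sV un aH bH int hh by auto
  then show ?thesis using st by blast
qed


lemma ipath_rev: "ipath E xs \<Longrightarrow> ipath E (rev xs)"
  unfolding ipath_def by (auto simp: rev_nth) 

lemma upath_rev:
  assumes "upath V E u ys" shows "upath V E u (rev ys)"
proof -
  have ip: "ipath E ys" and len: "3 \<le> length ys" and int: "\<And>i. 0 < i \<Longrightarrow> i < length ys - 1 \<Longrightarrow> \<not> E u (ys!i)"
    using assms unfolding upath_def by auto
  have "\<not> E u (rev ys ! i)" if "0 < i" "i < length ys - 1" for i
  proof -
    have "rev ys ! i = ys ! (length ys - Suc i)" using that by (simp add: rev_nth)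
    moreover have "0 < length ys - Suc i" "length ys - Suc i < length ys - 1" using that by linarith+
    ultimately show ?thesis using int by simp
  qed
  moreover have "ys \<noteq> []" using len by auto
  ultimately show ?thesis using assms ipath_rev[OF ip] unfolding upath_def
    by (simp add: hd_rev last_rev)
qed

definition seg :: "'a list \<Rightarrow> nat \<Rightarrow> nat \<Rightarrow> 'a list" where
  "seg xs i j = map (nth xs) [i..<Suc j]"

lemma seg_len: "length (seg xs i j) = Suc j - i" by (simp add: seg_def del: upt_Suc)
lemma seg_nth: "k < Suc j - i \<Longrightarrow> seg xs i j ! k = xs ! (i + k)" by (simp add: seg_def del: upt_Suc)

lemma seg_ipath:
  assumes ip: "ipath E xs" and ij: "i \<le> j" "j < length xs"
  shows "ipath E (seg xs i j)"
  unfolding ipath_def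
proof (intro conjI allI impI)
  have d: "distinct xs" using ip ipath_distinct by blast
  show "distinct (seg xs i j)"
    unfolding seg_def using d ij by (auto simp: distinct_map inj_on_def nth_eq_iff_index_eq)
  fix a b assume a: "a < length (seg xs i j)" and b: "b < length (seg xs i j)"
  have "E (xs!(i+a)) (xs!(i+b)) \<longleftrightarrow> (i + a = Suc (i + b) \<or> i + b = Suc (i + a))"
    using ipath_adj[OF ip] a b ij by (simp add: seg_len)
  then show "E (seg xs i j ! a) (seg xs i j ! b) \<longleftrightarrow> (a = Suc b \<or> b = Suc a)"
    using a b by (simp add: seg_len seg_nth)
qed

lemma seg_set: "i \<le> j \<Longrightarrow> j < length xs \<Longrightarrow> set (seg xs i j) \<subseteq> set xs"
  by (auto simp: seg_def)

lemma seg_mem: "i \<le> k \<Longrightarrow> k \<le> j \<Longrightarrow> xs ! k \<in> set (seg xs i j)"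
  unfolding seg_def by (simp del: upt_Suc)

lemma seg_hd: "i \<le> j \<Longrightarrow> hd (seg xs i j) = xs ! i"
  by (simp add: seg_def upt_conv_Cons del: upt_Suc)

lemma seg_last: "i \<le> j \<Longrightarrow> last (seg xs i j) = xs ! j"
  by (simp add: seg_def last_map del: upt_Suc)

section \<open>NC violations\<close>

lemma nc_viol:
  assumes "hole V E H1" "u \<in> H1" "hole V E H2" "u \<notin> H2" "a \<noteq> c" "E a b" "E b c"
    "a \<in> H1" "b \<in> H1" "c \<in> H1" "a \<in> H2" "b \<in> H2" "c \<in> H2"
  shows "\<not> NC_vertex V E u"
  unfolding NC_vertex_def share_consec_edges_def using assms by blast

lemma both_sides:
  assumes g: "graph V E" and up: "upath V E u ys" and s: "0 < s" "s < length ys - 1"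
    and x: "x \<noteq> u" "x \<in> V" "x \<noteq> ys!s" "\<not> E x (ys!s)"
    and i: "i < s" "E x (ys!i)" and j: "s < j" "j < length ys" "E x (ys!j)"
  shows "\<not> NC_vertex V E u"
proof -
  have ip: "ipath E ys" and len: "3 \<le> length ys" and sV: "set ys \<subseteq> V" and un: "u \<notin> set ys"
    and h1: "hole V E (insert u (set ys))"
    using up unfolding upath_def by auto
  define I where "I = {i. i < s \<and> E x (ys!i)}"
  define J where "J = {j. s < j \<and> j < length ys \<and> E x (ys!j)}"
  have fI: "finite I" "I \<noteq> {}" using i by (auto simp: I_def)
  have fJ: "finite J" "J \<noteq> {}" using j by (auto simp: J_def)
  define i' where "i' = Max I"
  define j' where "j' = Min J"
  have i'I: "i' \<in> I" using fI Max_in i'_def by blast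
  have j'J: "j' \<in> J" using fJ Min_in j'_def by blast
  have i'max: "\<And>k. k \<in> I \<Longrightarrow> k \<le> i'" using fI i'_def by simp
  have j'min: "\<And>k. k \<in> J \<Longrightarrow> j' \<le> k" using fJ j'_def by simp
  have i's: "i' < s" "E x (ys!i')" using i'I by (auto simp: I_def)
  have j's: "s < j'" "j' < length ys" "E x (ys!j')" using j'J by (auto simp: J_def)
  have xn: "x \<notin> set ys"
  proof
    assume "x \<in> set ys"
    then obtain k where k: "k < length ys" "x = ys!k" by (auto simp: in_set_conv_nth)
    have "k = Suc i' \<or> i' = Suc k" using ipath_adj[OF ip k(1), of i'] i's k j's by simp
    moreover have "k = Suc j' \<or> j' = Suc k" using ipath_adj[OF ip k(1), of j'] j's k by simp
    ultimately have "k = s" using i's j's by arith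
    then show False using k x by simp
  qed
  define sg where "sg = seg ys i' j'"
  have ij': "i' \<le> j'" using i's j's by simp
  have sglen: "length sg = Suc j' - i'" by (simp add: sg_def seg_len)
  have sgip: "ipath E sg" using seg_ipath[OF ip ij' j's(2)] sg_def by simp
  have sgset: "set sg \<subseteq> set ys" using seg_set[OF ij' j's(2)] sg_def by simp
  have "hole V E (insert x (set sg))"
  proof (rule path_hole[OF g sgip])
    show "3 \<le> length sg" using sglen i's j's by simp
    show "set sg \<subseteq> V" using sgset sV by auto
    show "x \<in> V" by fact
    show "x \<notin> set sg" using sgset xn by auto
    have "hd sg = ys!i'" "last sg = ys!j'" using seg_hd[OF ij', of ys] seg_last[OF ij', of ys] sg_def by simp+
    then show "E x (hd sg)" "E x (last sg)" using i's j's by simp+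
    fix k assume k: "0 < k" "k < length sg - 1"
    have kk: "k < Suc j' - i'" using k sglen by simp
    have e: "sg ! k = ys ! (i' + k)" using seg_nth[OF kk] sg_def by simp
    consider "i' + k < s" | "i' + k = s" | "s < i' + k" by linarith
    then show "\<not> E x (sg ! k)"
    proof cases
      case 1
      then have "i' + k \<notin> I" using i'max k by fastforce
      then show ?thesis using 1 e by (simp add: I_def)
    next
      case 2 then show ?thesis using e x by simp
    next
      case 3
      have "i' + k < j'" using k sglen by simp
      then have "i' + k \<notin> J" using j'min by fastforce
      then show ?thesis using 3 e j's \<open>i' + k < j'\<close> by (simp add: J_def)
    qed
  qed
  note h2 = this
  have un2: "u \<notin> insert x (set sg)" using x sgset un by auto
  have m: "ys!(s-1) \<in> set sg" "ys!s \<in> set sg" "ys!(s+1) \<in> set sg"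
    using i's j's by (auto simp: sg_def intro!: seg_mem)
  have d: "ys!(s-1) \<noteq> ys!(s+1)"
    using ipath_distinct[OF ip] s by (simp add: nth_eq_iff_index_eq)
  have e: "E (ys!(s-1)) (ys!s)" "E (ys!s) (ys!(s+1))"
    using ipath_adj[OF ip] s by auto
  have m2: "ys!(s-1) \<in> set ys" "ys!s \<in> set ys" "ys!(s+1) \<in> set ys" using s by auto
  show ?thesis
    by (rule nc_viol[OF h1 _ h2 un2 d e]) (use m m2 in auto)
qed

lemma side_choice:
  assumes g: "graph V E" and nc: "NC_vertex V E u" and up: "upath V E u ys"
    and s: "0 < s" "s < length ys - 1"
    and x: "x \<noteq> u" "x \<in> V" "x \<noteq> ys!s" "\<not> E x (ys!s)"
  shows "\<exists>ys' s'. upath V E u ys' \<and> set ys' = set ys \<and> 0 < s' \<and> s' < length ys' - 1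
     \<and> ys'!s' = ys!s \<and> (\<forall>i\<le>s'. \<not> E x (ys'!i))"
proof (cases "\<exists>i<s. E x (ys!i)")
  case False
  then have "\<forall>i\<le>s. \<not> E x (ys!i)" using x by (metis le_neq_implies_less)
  then show ?thesis using up s by blast
next
  case True
  then obtain i where i: "i < s" "E x (ys!i)" by blast
  have "\<not> (\<exists>j. s < j \<and> j < length ys \<and> E x (ys!j))"
    using both_sides[OF g up s x i] nc by blast
  then have up2: "\<forall>j. s \<le> j \<and> j < length ys \<longrightarrow> \<not> E x (ys!j)" using x by (metis le_neq_implies_less)
  define s' where "s' = length ys - 1 - s"
  have r1: "upath V E u (rev ys)" using upath_rev[OF up] .
  have r2: "rev ys ! s' = ys ! s" using s by (simp add: rev_nth s'_def)
  have r3: "\<forall>i\<le>s'. \<not> E x (rev ys ! i)"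
  proof (intro allI impI)
    fix i assume "i \<le> s'"
    then have "rev ys ! i = ys ! (length ys - Suc i)" "s \<le> length ys - Suc i" "length ys - Suc i < length ys"
      using s by (auto simp: rev_nth s'_def)
    then show "\<not> E x (rev ys ! i)" using up2 by simp
  qed
  have "0 < s'" "s' < length (rev ys) - 1" using s by (auto simp: s'_def)
  then show ?thesis using r1 r2 r3 by (intro exI[of _ "rev ys"] exI[of _ s']) auto
qed


section \<open>Contact lemma\<close>

definition Nh :: "'a set \<Rightarrow> ('a \<Rightarrow> 'a \<Rightarrow> bool) \<Rightarrow> 'a \<Rightarrow> 'a set" where
  "Nh V E u = {x. \<exists>H. hole V E H \<and> u \<in> H \<and> x \<in> H}"

lemma crossing:
  "successively E zs \<Longrightarrow> zs \<noteq> [] \<Longrightarrow> hd zs \<in> A \<Longrightarrow> last zs \<notin> A \<Longrightarrow>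
    \<exists>i. Suc i < length zs \<and> zs!i \<in> A \<and> zs!Suc i \<notin> A"
proof (induction zs)
  case Nil then show ?case by simp
next
  case (Cons z zs)
  show ?case
  proof (cases zs)
    case Nil then show ?thesis using Cons by simp
  next
    case (Cons z' zs')
    show ?thesis
    proof (cases "z' \<in> A")
      case False
      then show ?thesis using Cons \<open>hd (z # zs) \<in> A\<close> by (intro exI[of _ 0]) auto
    next
      case True
      have "successively E zs" using \<open>successively E (z # zs)\<close> Cons by (simp add: successively_Cons)
      then obtain i where "Suc i < length zs" "zs!i \<in> A" "zs!Suc i \<notin> A"
        using Cons.IH True \<open>zs = z' # zs'\<close> \<open>last (z # zs) \<notin> A\<close> by auto
      then show ?thesis by (intro exI[of _ "Suc i"]) auto
    qed
  qed
qed

lemma contact: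
  assumes g: "graph V E"
    and A: "a \<in> A" "E u a" "A \<subseteq> V" "\<And>x. x \<in> A \<Longrightarrow> x \<noteq> a \<Longrightarrow> x \<noteq> u \<and> \<not> E u x"
      "rch E A p a" "p \<in> A"
    and B: "b \<in> B" "E u b" "B \<subseteq> V" "\<And>x. x \<in> B \<Longrightarrow> x \<noteq> b \<Longrightarrow> x \<noteq> u \<and> \<not> E u x"
      "rch E B q b" "q \<in> B"
    and xs: "successively E xs" "xs \<noteq> []" "hd xs = p" "last xs = q" "set xs \<subseteq> V"
      "\<And>x. x \<in> set xs \<Longrightarrow> x \<in> A \<union> B \<or> (x \<notin> Nh V E u \<and> x \<noteq> u \<and> \<not> E u x)"
  shows "\<exists>x\<in>A. \<exists>y\<in>B. x = y \<or> E x y"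
proof (rule ccontr)
  assume nc: "\<not> (\<exists>x\<in>A. \<exists>y\<in>B. x = y \<or> E x y)"
  have sym: "\<And>x y. E x y \<Longrightarrow> E y x" using graph_sym[OF g] by blast
  have ab: "a \<noteq> b" "\<not> E a b" "b \<notin> A" using nc A B by blast+
  define S where "S = A \<union> B \<union> set xs"
  have r1: "rch E S a p" using rch_mono[of A S] rch_sym[OF sym A(5)] by (auto simp: S_def)
  have r2: "rch E S p q" using walk_rch[OF xs(1,2), of S] xs by (auto simp: S_def)
  have r3: "rch E S q b" using rch_mono[of B S] B(5) by (auto simp: S_def)
  have r: "rch E S a b" using rch_trans[OF rch_trans[OF r1 r2] r3] .
  have au: "a \<noteq> u" "b \<noteq> u" using A(2) B(2) graph_irr[OF g] by auto
  have uS: "u \<notin> S"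
  proof
    assume "u \<in> S"
    then show False using A(4)[of u] B(4)[of u] xs(6)[of u] au A(1) B(1) by (auto simp: S_def)
  qed
  have ncS: "\<not> E u z" if "z \<in> S" "z \<noteq> a" "z \<noteq> b" for z
    using that A(4)[of z] B(4)[of z] xs(6)[of z] by (auto simp: S_def)
  obtain zs where zs: "ipath E zs" "hd zs = a" "last zs = b" "set zs \<subseteq> S"
      "hole V E (insert u (set zs))" and zn: "zs \<noteq> []"
    using tool[OF g A(2) B(2) ab(1,2) _ _ _ uS ncS r] A B xs by (auto simp: S_def)
  have inN: "v \<in> Nh V E u" if "v \<in> set zs" for v
    using zs(5) that unfolding Nh_def by blast
  have AB: "v \<in> A \<union> B" if "v \<in> set zs" for v
    using inN[OF that] zs(4) that xs(6)[of v] by (auto simp: S_def)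
  obtain i where i: "Suc i < length zs" "zs!i \<in> A" "zs!Suc i \<notin> A"
    using crossing[OF ipath_walk[OF zs(1)] zn, of A] zs A(1) ab(3) by auto
  have "zs!Suc i \<in> B" using AB[of "zs!Suc i"] i by auto
  moreover have "E (zs!i) (zs!Suc i)" using ipath_adj[OF zs(1)] i by auto
  ultimately show False using nc i by blast
qed


lemma upath_facts:
  assumes "upath V E u ys"
  shows "ipath E ys" "3 \<le> length ys" "set ys \<subseteq> V" "u \<notin> set ys" "E u (ys!0)"
    "E u (ys!(length ys - 1))" "\<And>i. 0 < i \<Longrightarrow> i < length ys - 1 \<Longrightarrow> \<not> E u (ys!i)"
    "hole V E (insert u (set ys))" "ys \<noteq> []"
proof -
  have ne: "ys \<noteq> []" using assms unfolding upath_def by auto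
  then show "E u (ys!0)" "E u (ys!(length ys - 1))"
    using assms unfolding upath_def by (auto simp: hd_conv_nth last_conv_nth)
  show "ys \<noteq> []" by fact
qed (use assms in \<open>auto simp: upath_def\<close>)

lemma idx_path_rch:
  assumes "successively E ys" "i \<le> s" "s < length ys" "\<And>k. k \<le> s \<Longrightarrow> ys!k \<in> S"
    and g: "graph V E"
  shows "rch E S (ys!i) (ys!0)" "rch E S (ys!0) (ys!i)"
proof -
  show "rch E S (ys!0) (ys!i)" using seg_rch[OF assms(1), of 0 i S] assms by auto
  then show "rch E S (ys!i) (ys!0)" by (rule rch_sym_g[OF g])
qed

lemma core_lower:
  assumes g: "graph V E" and nc: "NC_vertex V E u" and up: "upath V E u ys"
    and s: "0 < s" "s < length ys - 1"
    and xs: "ipath E xs" "3 \<le> length xs" "set xs \<subseteq> V" "u \<notin> set xs" "hd xs = ys!s" "last xs = q"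
    and int: "\<And>k. 0 < k \<Longrightarrow> k < length xs - 1 \<Longrightarrow> xs!k \<notin> Nh V E u \<and> \<not> E u (xs!k)"
    and qc: "E u q \<or> (q \<in> Nh V E u \<and> \<not> E u q)"
    and low: "\<forall>i\<le>s. \<not> E q (ys!i)"
  shows False
proof -
  have sym: "\<And>x y. E x y \<Longrightarrow> E y x" using graph_sym[OF g] by blast
  note yf = upath_facts[OF up]
  define p where "p = ys!s"
  define n where "n = length xs"
  have xn: "xs \<noteq> []" using xs(2) by auto
  have x0: "xs!0 = p" using xs(5) xn by (simp add: hd_conv_nth p_def)
  have xl: "xs!(n-1) = q" using xs(6) xn by (simp add: last_conv_nth n_def)
  have n3: "0 < n" "n - 1 < n" "0 \<noteq> n - 1" "n - 1 \<noteq> Suc 0" using xs(2) n_def by linarith+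
  have pq: "p \<noteq> q" using ipath_distinct[OF xs(1)] x0 xl n3 n_def by (metis nth_eq_iff_index_eq)
  have npq: "\<not> E p q" using ipath_adj[OF xs(1), of 0 "n-1"] x0 xl n3 n_def by simp
  have qin: "q \<in> set xs" using xl n3 n_def by (metis nth_mem)
  have qV: "q \<in> V" using qin xs(3) by auto
  have qu: "q \<noteq> u" using qin xs(4) by auto
  have xsc: "x = p \<or> x = q \<or> (x \<notin> Nh V E u \<and> x \<noteq> u \<and> \<not> E u x)" if xin: "x \<in> set xs" for x
  proof -
    obtain k where k: "k < n" "x = xs!k" using xin by (auto simp: in_set_conv_nth n_def)
    show ?thesis
    proof (cases "k = 0 \<or> k = n - 1")
      case True then show ?thesis using k x0 xl by auto
    next
      case False
      then have "0 < k" "k < length xs - 1" using k n_def by auto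
      moreover have "xs!k \<in> set xs" using k n_def by simp
      ultimately show ?thesis using int[of k] k xs(4) by auto
    qed
  qed
  define L where "L = (\<lambda>k. ys!k) ` {..s}"
  have Lq: "x \<noteq> q \<and> \<not> E x q" if thatH: "x \<in> L" for x
  proof -
    obtain k where k: "k \<le> s" "x = ys!k" using thatH by (auto simp: L_def)
    have "\<not> E x q" using low k sym by blast
    moreover have "x \<noteq> q"
    proof
      assume xq: "x = q"
      have "k \<noteq> s" using xq k pq p_def by auto
      then have "Suc k \<le> s" using k by simp
      moreover have "E (ys!k) (ys!Suc k)" using ipath_adj[OF yf(1), of k "Suc k"] s k by simp
      ultimately show False using low xq k by auto
    qed
    ultimately show ?thesis by blast
  qed
  have Lys: "L \<subseteq> set ys" using s by (auto simp: L_def)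
  have LV: "L \<subseteq> V" using Lys yf(3) by auto
  have Lmem: "\<And>k. k \<le> s \<Longrightarrow> ys!k \<in> L" by (auto simp: L_def)
  have Lint: "x \<noteq> u \<and> \<not> E u x" if thatH: "x \<in> L" "x \<noteq> ys!0" for x
  proof -
    obtain k where k: "k \<le> s" "x = ys!k" using thatH by (auto simp: L_def)
    have "k \<noteq> 0" using k thatH by (cases k) auto
    then show ?thesis using yf(7)[of k] yf(4) k s thatH Lys by auto
  qed
  have Lr: "rch E L p (ys!0)"
    using idx_path_rch(1)[OF ipath_walk[OF yf(1)], of s s L] s Lmem g p_def by auto
  have pL: "p \<in> L" using Lmem p_def by simp
  have y0L: "ys!0 \<in> L" using Lmem by simp
  show False
  proof (cases "E u q")
    case True
    have "\<exists>x\<in>L. \<exists>y\<in>{q}. x = y \<or> E x y"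
    proof (rule contact[OF g y0L yf(5) LV Lint Lr pL, of q "{q}" q xs])
      show "q \<in> {q}" "E u q" "{q} \<subseteq> V" using True qV by auto
      show "\<And>x. x \<in> {q} \<Longrightarrow> x \<noteq> q \<Longrightarrow> x \<noteq> u \<and> \<not> E u x" by simp
      show "rch E {q} q q" by (rule rch_refl)
      show "q \<in> {q}" by simp
      show "successively E xs" using ipath_walk[OF xs(1)] .
      show "xs \<noteq> []" "hd xs = p" "last xs = q" "set xs \<subseteq> V" using xn xs p_def by auto
      show "\<And>x. x \<in> set xs \<Longrightarrow> x \<in> L \<union> {q} \<or> (x \<notin> Nh V E u \<and> x \<noteq> u \<and> \<not> E u x)"
        using xsc pL by blast
    qed
    then show False using Lq by blast
  next
    case False
    then have qN: "q \<in> Nh V E u" using qc by blast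
    then obtain Hq where Hq: "hole V E Hq" "u \<in> Hq" "q \<in> Hq" unfolding Nh_def by blast
    obtain zs where zs: "upath V E u zs" "set zs = Hq - {u}" using hole_upath[OF g Hq(1,2)] by blast
    note zf = upath_facts[OF zs(1)]
    define m where "m = length zs"
    have "q \<in> set zs" using zs(2) Hq qu by auto
    then obtain t where t: "t < m" "zs!t = q" by (auto simp: in_set_conv_nth m_def)
    have t0: "t \<noteq> 0" using t zf(5) False by metis
    have t1: "t \<noteq> m - 1" using t zf(6) False m_def by metis
    have tt: "0 < t" "t < m - 1" using t0 t1 t by auto
    have zdist: "distinct zs" using ipath_distinct[OF zf(1)] .
    have zsq: "zs!k \<noteq> q" if thatH: "k < m" "k \<noteq> t" for k
      using zdist thatH t m_def by (metis nth_eq_iff_index_eq)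
    define L' where "L' = (\<lambda>k. zs!k) ` {..t}"
    define U' where "U' = (\<lambda>k. zs!k) ` {t..<m}"
    have L'V: "L' \<subseteq> V" using zf(3) t by (auto simp: L'_def m_def)
    have U'V: "U' \<subseteq> V" using zf(3) by (auto simp: U'_def m_def)
    have L'int: "x \<noteq> u \<and> \<not> E u x" if thatH: "x \<in> L'" "x \<noteq> zs!0" for x
    proof -
      obtain k where k: "k \<le> t" "x = zs!k" using thatH by (auto simp: L'_def)
      have "k \<noteq> 0" using k thatH by (cases k) auto
      then show ?thesis using zf(7)[of k] zf(4) k tt thatH t m_def by auto
    qed
    have U'int: "x \<noteq> u \<and> \<not> E u x" if thatH: "x \<in> U'" "x \<noteq> zs!(m-1)" for x
    proof -
      obtain k where k: "t \<le> k" "k < m" "x = zs!k" using thatH by (auto simp: U'_def)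
      have "k \<noteq> m - 1" using k thatH by auto
      then show ?thesis using zf(7)[of k] zf(4) k tt thatH m_def by auto
    qed
    have L'r: "rch E L' q (zs!0)"
      using idx_path_rch(1)[OF ipath_walk[OF zf(1)], of t t L'] t g m_def by (auto simp: L'_def)
    have U'r: "rch E U' q (zs!(m-1))"
      using seg_rch[OF ipath_walk[OF zf(1)], of t "m-1" U'] t tt m_def by (auto simp: U'_def)
    have qL': "q \<in> L'" "zs!0 \<in> L'" using t by (auto simp: L'_def)
    have qU': "q \<in> U'" "zs!(m-1) \<in> U'" using t tt by (auto simp: U'_def)
    have xsc': "\<And>x. x \<in> set xs \<Longrightarrow> x \<in> L \<union> B \<or> (x \<notin> Nh V E u \<and> x \<noteq> u \<and> \<not> E u x)"
      if thatH: "q \<in> B" for B using xsc pL thatH by blast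
    have c1: "\<exists>x\<in>L. \<exists>y\<in>L'. x = y \<or> E x y"
      by (rule contact[OF g y0L yf(5) LV Lint Lr pL qL'(2) zf(5) L'V L'int L'r qL'(1)
            ipath_walk[OF xs(1)] xn])
         (use xs p_def xsc'[OF qL'(1)] in auto)
    have c2: "\<exists>x\<in>L. \<exists>y\<in>U'. x = y \<or> E x y"
      by (rule contact[OF g y0L yf(5) LV Lint Lr pL qU'(2) _ U'V U'int U'r qU'(1)
            ipath_walk[OF xs(1)] xn])
         (use xs p_def xsc'[OF qU'(1)] zf(6) m_def in auto)
    obtain x1 y1 where xy1: "x1 \<in> L" "y1 \<in> L'" "x1 = y1 \<or> E x1 y1" using c1 by blast
    obtain x2 y2 where xy2: "x2 \<in> L" "y2 \<in> U'" "x2 = y2 \<or> E x2 y2" using c2 by blast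
    have y1q: "y1 \<noteq> q" using xy1 Lq by blast
    have y2q: "y2 \<noteq> q" using xy2 Lq by blast
    obtain k1 where k1: "k1 < t" "y1 = zs!k1" using xy1(2) y1q t by (auto simp: L'_def le_less)
    obtain k2 where k2: "t < k2" "k2 < m" "y2 = zs!k2" using xy2(2) y2q t by (auto simp: U'_def le_less)
    define S where "S = (L \<union> set zs) - {q}"
    have zsS: "zs!k \<in> S" if thatH: "k < m" "k \<noteq> t" for k
      using zsq[OF thatH] thatH by (auto simp: S_def m_def)
    have LS: "L \<subseteq> S" using Lq by (auto simp: S_def)
    have ra: "rch E S (zs!(t-1)) y1"
    proof -
      have "rch E S (zs!k1) (zs!(t-1))"
        using seg_rch[OF ipath_walk[OF zf(1)], of k1 "t-1" S] k1 t zsS m_def by auto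
      then show ?thesis using rch_sym_g[OF g] k1 by blast
    qed
    have rb: "rch E S y1 x1"
      using rch_eq_or_edge[of y1 x1 E S] xy1 sym LS zsS k1 t by auto
    obtain i1 where i1: "i1 \<le> s" "x1 = ys!i1" using xy1(1) by (auto simp: L_def)
    obtain i2 where i2: "i2 \<le> s" "x2 = ys!i2" using xy2(1) by (auto simp: L_def)
    have rc: "rch E S x1 x2"
    proof -
      have "\<And>k. k \<le> s \<Longrightarrow> ys!k \<in> S" using Lmem LS by auto
      then have "rch E S x1 (ys!0)" "rch E S (ys!0) x2"
        using idx_path_rch[OF ipath_walk[OF yf(1)], of _ s S] i1 i2 s g by auto
      then show ?thesis by (rule rch_trans)
    qed
    have rd: "rch E S x2 y2"
      using rch_eq_or_edge[of x2 y2 E S] xy2 LS zsS k2 by auto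
    have re: "rch E S y2 (zs!(t+1))"
    proof -
      have "rch E S (zs!(t+1)) (zs!k2)"
        using seg_rch[OF ipath_walk[OF zf(1)], of "t+1" k2 S] k2 zsS m_def by auto
      then show ?thesis using rch_sym_g[OF g] k2 by blast
    qed
    have r: "rch E S (zs!(t-1)) (zs!(t+1))"
      using rch_trans[OF rch_trans[OF rch_trans[OF rch_trans[OF ra rb] rc] rd] re] .
    have eqa: "E q (zs!(t-1))" "E q (zs!(t+1))"
      using ipath_adj[OF zf(1), of t "t-1"] ipath_adj[OF zf(1), of t "t+1"] t tt m_def by auto
    have ab: "zs!(t-1) \<noteq> zs!(t+1)" "\<not> E (zs!(t-1)) (zs!(t+1))"
      using zdist ipath_adj[OF zf(1), of "t-1" "t+1"] tt m_def by (auto simp: nth_eq_iff_index_eq)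
    have SV: "S \<subseteq> V" using LV zf(3) by (auto simp: S_def)
    have abS: "zs!(t-1) \<in> S" "zs!(t+1) \<in> S" using zsS tt by auto
    have qS: "q \<notin> S" by (simp add: S_def)
    have ncS: "\<not> E q z" if thatH: "z \<in> S" "z \<noteq> zs!(t-1)" "z \<noteq> zs!(t+1)" for z
    proof (cases "z \<in> L")
      case True then show ?thesis using Lq sym by blast
    next
      case False
      then obtain k where k: "k < m" "z = zs!k" "k \<noteq> t" using thatH t by (auto simp: S_def in_set_conv_nth m_def)
      show ?thesis
      proof
        assume "E q z"
        then have "t = Suc k \<or> k = Suc t" using ipath_adj[OF zf(1), of t k] t k m_def by auto
        then show False using thatH k by auto
      qed
    qed
    obtain zs2 where zs2: "ipath E zs2" "zs2 \<noteq> []" "hd zs2 = zs!(t-1)" "last zs2 = zs!(t+1)"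
        "set zs2 \<subseteq> S" "hole V E (insert q (set zs2))"
      using tool[OF g eqa ab SV abS qS ncS r] by blast
    have ab2: "zs!(t-1) \<in> set zs2" "zs!(t+1) \<in> set zs2" using zs2 by (metis hd_in_set last_in_set)+
    have zm: "q \<in> set zs" "zs!(t-1) \<in> set zs" "zs!(t+1) \<in> set zs"
      using t tt m_def by (metis nth_mem, simp, simp)
    have u2: "u \<notin> insert q (set zs2)" using zs2(5) qu yf(4) zf(4) Lys by (auto simp: S_def)
    have "\<not> NC_vertex V E u"
      by (rule nc_viol[OF zf(8) _ zs2(6) u2 ab(1) _ eqa(2)])
         (use eqa sym ab2 zm in auto)
    then show False using nc by blast
  qed
qed


lemma core_T:
  assumes g: "graph V E" and nc: "NC_vertex V E u"
    and xs: "ipath E xs" "3 \<le> length xs" "set xs \<subseteq> V" "u \<notin> set xs"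
    and int: "\<And>k. 0 < k \<Longrightarrow> k < length xs - 1 \<Longrightarrow> xs!k \<notin> Nh V E u \<and> \<not> E u (xs!k)"
    and pc: "hd xs \<in> Nh V E u" "\<not> E u (hd xs)"
    and qc: "E u (last xs) \<or> (last xs \<in> Nh V E u \<and> \<not> E u (last xs))"
  shows False
proof -
  define p where "p = hd xs"
  define q where "q = last xs"
  define n where "n = length xs"
  have xn: "xs \<noteq> []" using xs(2) by auto
  have x0: "xs!0 = p" using xn by (simp add: hd_conv_nth p_def)
  have xl: "xs!(n-1) = q" using xn by (simp add: last_conv_nth n_def q_def)
  have n3: "0 < n" "n - 1 < n" "0 \<noteq> n - 1" "n - 1 \<noteq> Suc 0" using xs(2) n_def by linarith+
  have pq: "p \<noteq> q" using ipath_distinct[OF xs(1)] x0 xl n3 n_def by (metis nth_eq_iff_index_eq)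
  have npq: "\<not> E q p" using ipath_adj[OF xs(1), of "n-1" 0] x0 xl n3 n_def by simp
  have pin: "p \<in> set xs" using xn p_def by simp
  have qin: "q \<in> set xs" using xn q_def by simp
  have qV: "q \<in> V" using qin xs(3) by auto
  have qu: "q \<noteq> u" "p \<noteq> u" using qin pin xs(4) by auto
  obtain Hp where Hp: "hole V E Hp" "u \<in> Hp" "p \<in> Hp" using pc(1) unfolding Nh_def p_def by blast
  obtain ys where ys: "upath V E u ys" "set ys = Hp - {u}" using hole_upath[OF g Hp(1,2)] by blast
  note yf = upath_facts[OF ys(1)]
  have "p \<in> set ys" using ys(2) Hp qu by auto
  then obtain s where s: "s < length ys" "ys!s = p" by (auto simp: in_set_conv_nth)
  have s0: "s \<noteq> 0" using s yf(5) pc(2) p_def by metis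
  have s1: "s \<noteq> length ys - 1" using s yf(6) pc(2) p_def by metis
  have ss: "0 < s" "s < length ys - 1" using s0 s1 s by auto
  obtain ys' s' where ys': "upath V E u ys'" "set ys' = set ys" "0 < s'" "s' < length ys' - 1"
      "ys'!s' = ys!s" "\<forall>i\<le>s'. \<not> E q (ys'!i)"
    using side_choice[OF g nc ys(1) ss qu(1) qV] pq npq s by auto
  show False
    by (rule core_lower[OF g nc ys'(1) ys'(3,4) xs _ _ int _ ys'(6)])
       (use ys' s p_def q_def qc in auto)
qed

lemma core:
  assumes g: "graph V E" and nc: "NC_vertex V E u"
    and xs: "ipath E xs" "3 \<le> length xs" "set xs \<subseteq> V" "u \<notin> set xs"
    and int: "\<And>k. 0 < k \<Longrightarrow> k < length xs - 1 \<Longrightarrow> xs!k \<notin> Nh V E u \<and> \<not> E u (xs!k)"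
    and pc: "E u (hd xs) \<or> (hd xs \<in> Nh V E u \<and> \<not> E u (hd xs))"
    and qc: "E u (last xs) \<or> (last xs \<in> Nh V E u \<and> \<not> E u (last xs))"
  shows False
proof (cases "E u (hd xs)")
  case False
  then show ?thesis using core_T[OF g nc xs int] pc qc by blast
next
  case hdu: True
  show ?thesis
  proof (cases "E u (last xs)")
    case True
    have uV: "u \<in> V" using graph_V1[OF g hdu] .
    have "hole V E (insert u (set xs))"
      using path_hole[OF g xs(1,2,3) uV xs(4) hdu True] int by blast
    moreover have "xs!1 \<in> set xs" using xs(2) by simp
    ultimately have "xs!1 \<in> Nh V E u" unfolding Nh_def by blast
    moreover have "1 < length xs - 1" using xs(2) by linarith
    ultimately show False using int[of 1] by auto
  next
    case False
    define n where "n = length xs"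
    have xn: "xs \<noteq> []" using xs(2) by auto
    have int': "rev xs ! k \<notin> Nh V E u \<and> \<not> E u (rev xs ! k)"
      if k: "0 < k" "k < length (rev xs) - 1" for k
    proof -
      have "rev xs ! k = xs ! (length xs - Suc k)" using k by (simp add: rev_nth)
      moreover have "0 < length xs - Suc k" "length xs - Suc k < length xs - 1" using k by auto
      ultimately show ?thesis using int by simp
    qed
    show False
      by (rule core_T[OF g nc ipath_rev[OF xs(1)] _ _ _ int'])
         (use xs False qc hdu xn in \<open>auto simp: hd_rev last_rev\<close>)
  qed
qed


section \<open>One chordalization step\<close>

lemma lc_iff: "local_chordalize V E u x y \<longleftrightarrow>
   E x y \<or> (x = u \<and> y \<noteq> u \<and> y \<in> Nh V E u) \<or> (y = u \<and> x \<noteq> u \<and> x \<in> Nh V E u)"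
  unfolding local_chordalize_def Nh_def by blast

lemma Nh_V: "x \<in> Nh V E u \<Longrightarrow> x \<in> V \<and> u \<in> V"
  unfolding Nh_def hole_alt by blast

lemma graph_lc:
  assumes g: "graph V E" shows "graph V (local_chordalize V E u)"
proof -
  have a: "x \<in> V \<and> y \<in> V" if "local_chordalize V E u x y" for x y
    using that g Nh_V[of _ V E u] unfolding graph_def lc_iff by blast
  have b: "local_chordalize V E u y x" if "local_chordalize V E u x y" for x y
    using that g unfolding graph_def lc_iff by blast
  have c: "\<not> local_chordalize V E u x x" for x
    using g unfolding graph_def lc_iff by blast
  show ?thesis using a b c g unfolding graph_def by blast
qed

lemma hole_cong:
  assumes "\<And>x y. x \<in> H \<Longrightarrow> y \<in> H \<Longrightarrow> E1 x y = E2 x y"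
  shows "hole V E1 H = hole V E2 H"
proof -
  have rel: "(\<lambda>a b. E1 a b \<and> a \<in> H \<and> b \<in> H) = (\<lambda>a b. E2 a b \<and> a \<in> H \<and> b \<in> H)"
    using assms by (intro ext) blast
  have cs: "\<forall>x\<in>H. {y\<in>H. E1 x y} = {y\<in>H. E2 x y}" using assms by blast
  show ?thesis unfolding hole_def rel using cs by simp
qed

lemma ipath_cong:
  assumes "\<And>x y. x \<in> set xs \<Longrightarrow> y \<in> set xs \<Longrightarrow> E1 x y = E2 x y"
  shows "ipath E1 xs = ipath E2 xs"
  unfolding ipath_def using assms by (metis nth_mem)

lemma step_holes:
  assumes g: "graph V E" and nc: "NC_vertex V E u"
    and h: "hole V (local_chordalize V E u) H"
  shows "hole V E H \<and> u \<notin> H"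
proof -
  define E' where "E' = local_chordalize V E u"
  have g': "graph V E'" using graph_lc[OF g] E'_def by simp
  have uH: "u \<notin> H"
  proof
    assume u: "u \<in> H"
    obtain ys where ys: "upath V E' u ys" using hole_upath[OF g' h[folded E'_def] u] by blast
    note yf = upath_facts[OF ys(1)]
    have eq: "E' x y = E x y" if "x \<in> set ys" "y \<in> set ys" for x y
      using that yf(4) unfolding E'_def lc_iff by auto
    have ip: "ipath E ys" using ipath_cong[of ys E' E] eq yf(1) by blast
    have yn: "ys \<noteq> []" by (rule yf(9))
    have conv: "E u x \<or> (x \<in> Nh V E u \<and> \<not> E u x)" if "E' u x" for x
      using that unfolding E'_def lc_iff by auto
    show False
    proof (rule core[OF g nc ip yf(2,3,4)])
      fix k assume k: "0 < k" "k < length ys - 1"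
      have "\<not> E' u (ys!k)" using yf(7)[OF k] .
      moreover have "k < length ys" using k by linarith
      then have "ys!k \<noteq> u" using yf(4) nth_mem by metis
      ultimately show "ys!k \<notin> Nh V E u \<and> \<not> E u (ys!k)" unfolding E'_def lc_iff by auto
    next
      show "E u (hd ys) \<or> (hd ys \<in> Nh V E u \<and> \<not> E u (hd ys))"
        using conv ys unfolding upath_def by blast
      show "E u (last ys) \<or> (last ys \<in> Nh V E u \<and> \<not> E u (last ys))"
        using conv ys unfolding upath_def by blast
    qed
  qed
  have "hole V E H = hole V E' H"
    by (rule hole_cong) (use uH in \<open>auto simp: E'_def lc_iff\<close>)
  then show ?thesis using h uH E'_def by simp
qed

lemma NC_lc:
  assumes g: "graph V E" and nc: "NC_vertex V E u" and ncw: "NC_vertex V E w"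
  shows "NC_vertex V (local_chordalize V E u) w"
  unfolding NC_vertex_def
proof
  assume "\<exists>H H'. hole V (local_chordalize V E u) H \<and> w \<in> H \<and> hole V (local_chordalize V E u) H'
      \<and> w \<notin> H' \<and> share_consec_edges (local_chordalize V E u) H H'"
  then obtain H H' where hh: "hole V (local_chordalize V E u) H" "w \<in> H"
      "hole V (local_chordalize V E u) H'" "w \<notin> H'" "share_consec_edges (local_chordalize V E u) H H'"
    by blast
  have h1: "hole V E H" "u \<notin> H" using step_holes[OF g nc hh(1)] by auto
  have h2: "hole V E H'" using step_holes[OF g nc hh(3)] by auto
  have "share_consec_edges E H H'"
    using hh(5) h1(2) unfolding share_consec_edges_def lc_iff by blast
  then show False using ncw h1 h2 hh(2,4) unfolding NC_vertex_def by blast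
qed

lemma NC_lc_self:
  assumes g: "graph V E" and nc: "NC_vertex V E u"
  shows "NC_vertex V (local_chordalize V E u) u"
  unfolding NC_vertex_def using step_holes[OF g nc] by blast


lemma hat_Nil: "hat_edges V E [] = E" by (simp add: hat_edges_def)
lemma hat_Cons: "hat_edges V E (u # us) = hat_edges V (local_chordalize V E u) us"
  by (simp add: hat_edges_def)

lemma hat_props:
  "graph V E0 \<Longrightarrow> (\<forall>c\<in>set us. NC_vertex V E0 c) \<Longrightarrow>
   (\<forall>H. hole V (hat_edges V E0 us) H \<longrightarrow> hole V E0 H) \<and>
   (\<forall>x y. hat_edges V E0 us x y \<longrightarrow> E0 x y \<or>
      (\<exists>c\<in>set us. (x = c \<and> y \<noteq> c \<and> y \<in> Nh V E0 c) \<or> (y = c \<and> x \<noteq> c \<and> x \<in> Nh V E0 c)))"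
proof (induction us arbitrary: E0)
  case Nil then show ?case by (simp add: hat_Nil)
next
  case (Cons u us)
  define E1 where "E1 = local_chordalize V E0 u"
  have g1: "graph V E1" using graph_lc[OF Cons.prems(1)] E1_def by simp
  have ncu: "NC_vertex V E0 u" using Cons.prems(2) by simp
  have nc1: "\<forall>c\<in>set us. NC_vertex V E1 c"
  proof
    fix c assume c: "c \<in> set us"
    show "NC_vertex V E1 c"
    proof (cases "c = u")
      case True then show ?thesis using NC_lc_self[OF Cons.prems(1) ncu] E1_def by simp
    next
      case False then show ?thesis using NC_lc[OF Cons.prems(1) ncu] Cons.prems(2) c E1_def by simp
    qed
  qed
  note IH = Cons.IH[OF g1 nc1]
  have hh: "hole V E0 H" if "hole V E1 H" for H
    using step_holes[OF Cons.prems(1) ncu] that E1_def by blast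
  have Nsub: "Nh V E1 c \<subseteq> Nh V E0 c" for c
    using hh unfolding Nh_def by blast
  show ?case unfolding hat_Cons E1_def[symmetric]
  proof (intro conjI allI impI)
    fix H assume "hole V (hat_edges V E1 us) H"
    then show "hole V E0 H" using IH hh by blast
  next
    fix x y assume "hat_edges V E1 us x y"
    then have "E1 x y \<or> (\<exists>c\<in>set us. (x = c \<and> y \<noteq> c \<and> y \<in> Nh V E1 c) \<or> (y = c \<and> x \<noteq> c \<and> x \<in> Nh V E1 c))"
      using IH by blast
    then show "E0 x y \<or> (\<exists>c\<in>set (u # us). (x = c \<and> y \<noteq> c \<and> y \<in> Nh V E0 c) \<or> (y = c \<and> x \<noteq> c \<and> x \<in> Nh V E0 c))"
      using Nsub unfolding E1_def lc_iff by fastforce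
  qed
qed


lemma lemB:
  assumes g: "graph V E" and ncc: "NC_vertex V E c" and ncc': "NC_vertex V E c'"
    and e: "E c c'" and w: "w \<in> Nh V E c" "w \<in> Nh V E c'" "\<not> E c w" "\<not> E c' w"
    and nob: "\<And>H. hole V E H \<Longrightarrow> c \<in> H \<Longrightarrow> c' \<in> H \<Longrightarrow> False"
  shows False
proof -
  have cc: "c \<noteq> c'" using e graph_irr[OF g] by auto
  have wc: "w \<noteq> c" "w \<noteq> c'" using e w graph_sym[OF g] by auto
  have cV: "c \<in> V" "c' \<in> V" using graph_V1[OF g e] graph_V2[OF g e] by auto
  obtain Hc where Hc: "hole V E Hc" "c \<in> Hc" "w \<in> Hc" using w(1) unfolding Nh_def by blast
  obtain ys where ys: "upath V E c ys" "set ys = Hc - {c}" using hole_upath[OF g Hc(1,2)] by blast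
  note yf = upath_facts[OF ys(1)]
  have "w \<in> set ys" using ys(2) Hc wc by auto
  then obtain s where s: "s < length ys" "ys!s = w" by (auto simp: in_set_conv_nth)
  have ss: "0 < s" "s < length ys - 1"
  proof -
    have "s \<noteq> 0" using s yf(5) w(3) by metis
    moreover have "s \<noteq> length ys - 1" using s yf(6) w(3) by metis
    ultimately show "0 < s" "s < length ys - 1" using s by auto
  qed
  have c'ys: "c' \<notin> set ys" using nob Hc ys(2) by blast
  obtain ys1 s1 where ys1: "upath V E c ys1" "set ys1 = set ys" "0 < s1" "s1 < length ys1 - 1"
      "ys1!s1 = ys!s" "\<forall>i\<le>s1. \<not> E c' (ys1!i)"
    using side_choice[OF g ncc ys(1) ss, of c'] cc cV s w(4) c'ys by (metis nth_mem)
  note y1f = upath_facts[OF ys1(1)]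
  obtain Hc' where Hc': "hole V E Hc'" "c' \<in> Hc'" "w \<in> Hc'" using w(2) unfolding Nh_def by blast
  obtain zs where zs: "upath V E c' zs" "set zs = Hc' - {c'}" using hole_upath[OF g Hc'(1,2)] by blast
  note zf = upath_facts[OF zs(1)]
  have "w \<in> set zs" using zs(2) Hc' wc by auto
  then obtain t where t: "t < length zs" "zs!t = w" by (auto simp: in_set_conv_nth)
  have tt: "0 < t" "t < length zs - 1"
  proof -
    have "t \<noteq> 0" using t zf(5) w(4) by metis
    moreover have "t \<noteq> length zs - 1" using t zf(6) w(4) by metis
    ultimately show "0 < t" "t < length zs - 1" using t by auto
  qed
  have czs: "c \<notin> set zs" using nob Hc' zs(2) by blast
  obtain zs1 t1 where zs1: "upath V E c' zs1" "set zs1 = set zs" "0 < t1" "t1 < length zs1 - 1"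
      "zs1!t1 = zs!t" "\<forall>i\<le>t1. \<not> E c (zs1!i)"
    using side_choice[OF g ncc' zs(1) tt, of c] cc cV t w(3) czs by (metis nth_mem)
  note z1f = upath_facts[OF zs1(1)]
  define S where "S = insert c' ((\<lambda>k. zs1!k) ` {..t1} \<union> (\<lambda>k. ys1!k) ` {..s1})"
  have Sz: "\<And>k. k \<le> t1 \<Longrightarrow> zs1!k \<in> S" and Sy: "\<And>k. k \<le> s1 \<Longrightarrow> ys1!k \<in> S"
    by (auto simp: S_def)
  have r1: "rch E S c' (zs1!0)" using rch_edge[of E c' "zs1!0" S] z1f(5) Sz[of 0] by (auto simp: S_def)
  have r2: "rch E S (zs1!0) (zs1!t1)"
    using idx_path_rch(2)[OF ipath_walk[OF z1f(1)], of t1 t1 S] zs1 Sz g by auto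
  have r3: "rch E S (ys1!s1) (ys1!0)"
    using idx_path_rch(1)[OF ipath_walk[OF y1f(1)], of s1 s1 S] ys1 Sy g by auto
  have "zs1!t1 = ys1!s1" using zs1(5) ys1(5) s t by simp
  then have r: "rch E S c' (ys1!0)"
    using rch_trans[OF rch_trans[OF r1 r2]] r3 by simp
  have ab: "c' \<noteq> ys1!0" "\<not> E c' (ys1!0)" using c'ys ys1(2,6) y1f(9) by (auto simp: nth_mem)
  have SV: "S \<subseteq> V" using cV z1f(3) y1f(3) zs1 ys1 by (auto simp: S_def)
  have abS: "c' \<in> S" "ys1!0 \<in> S" using Sy by (auto simp: S_def)
  have cS: "c \<notin> S"
  proof -
    have "c \<notin> set zs1" using zs1(2) czs by simp
    moreover have "c \<notin> set ys1" using y1f(4) .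
    moreover have "zs1!k \<in> set zs1" if "k \<le> t1" for k using that zs1(4) by auto
    moreover have "ys1!k \<in> set ys1" if "k \<le> s1" for k using that ys1(4) by auto
    ultimately show ?thesis using cc by (auto simp: S_def)
  qed
  have ncS: "\<not> E c z" if zS: "z \<in> S" "z \<noteq> c'" "z \<noteq> ys1!0" for z
  proof -
    have "z \<in> (\<lambda>k. zs1!k) ` {..t1} \<or> z \<in> (\<lambda>k. ys1!k) ` {..s1}" using zS by (auto simp: S_def)
    then show ?thesis
    proof
      assume "z \<in> (\<lambda>k. zs1!k) ` {..t1}"
      then show ?thesis using zs1(6) by auto
    next
      assume "z \<in> (\<lambda>k. ys1!k) ` {..s1}"
      then obtain k where k: "k \<le> s1" "z = ys1!k" by auto
      have "k \<noteq> 0" using k zS by (cases k) auto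
      then show ?thesis using y1f(7)[of k] k ys1(4) by auto
    qed
  qed
  obtain zs2 where zs2: "ipath E zs2" "zs2 \<noteq> []" "hd zs2 = c'" "hole V E (insert c (set zs2))"
    using tool[OF g e y1f(5) ab SV abS cS ncS r] by blast
  have "c' \<in> insert c (set zs2)" using zs2 by (metis hd_in_set insertCI)
  then show False using nob[OF zs2(4)] by simp
qed


lemma ipath3:
  assumes g: "graph V E" and "a \<noteq> b" "b \<noteq> c" "a \<noteq> c" "E a b" "E b c" "\<not> E a c"
  shows "ipath E [a, b, c]"
proof -
  have s: "E b a" "E c b" "\<not> E c a" using assms graph_sym[OF g] by blast+
  have i: "\<not> E a a" "\<not> E b b" "\<not> E c c" using graph_irr[OF g] by blast+
  have "E ([a,b,c]!i) ([a,b,c]!j) \<longleftrightarrow> (i = Suc j \<or> j = Suc i)" if "i < 3" "j < 3" for i j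
  proof -
    have "i = 0 \<or> i = 1 \<or> i = 2" "j = 0 \<or> j = 1 \<or> j = 2" using that by linarith+
    then show ?thesis using assms s i by auto
  qed
  then show ?thesis unfolding ipath_def using assms by auto
qed

theorem theorem2p6:
  fixes V :: "'a set" and E :: "'a \<Rightarrow> 'a \<Rightarrow> bool" and C K :: "'a set" and us :: "'a list"
  assumes "graph V E"
    and "hole_cover V E C"
    and "NC_set V E C"
    and "distinct us" and "set us = C"
    and "K \<subseteq> V"
    and "clique V (hat_edges V E us) K"
    and "\<not> clique V E K"
  shows "\<exists>u\<in>K \<inter> C. clique V E (K - {u})"
proof -
  note g = assms(1)
  have ncC: "\<forall>c\<in>set us. NC_vertex V E c" using assms(3,5) unfolding NC_set_def by blast
  have nc: "NC_vertex V E c" if "c \<in> C" for c using assms(3) that unfolding NC_set_def by blast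
  have HE: "E x y \<or> (\<exists>c\<in>C. (x = c \<and> y \<noteq> c \<and> y \<in> Nh V E c) \<or> (y = c \<and> x \<noteq> c \<and> x \<in> Nh V E c))"
    if "hat_edges V E us x y" for x y
    using hat_props[OF g ncC] that assms(5) by blast
  have two: "c = c'" if "hole V E H" "c \<in> C" "c' \<in> C" "c \<in> H" "c' \<in> H" for H c c'
  proof (rule ccontr)
    assume "c \<noteq> c'"
    have "finite H" using that(1) unfolding hole_alt by blast
    then have "card {c, c'} \<le> card (H \<inter> C)" using that by (intro card_mono) auto
    moreover have "card (H \<inter> C) \<le> 1" using assms(3) that(1) unfolding NC_set_def by blast
    ultimately show False using \<open>c \<noteq> c'\<close> by simp
  qed
  have NhC: "w = c" if "c \<in> C" "w \<in> C" "w \<in> Nh V E c" for c w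
    using that two unfolding Nh_def by blast
  have cl: "hat_edges V E us x y" if "x \<in> K" "y \<in> K" "x \<noteq> y" for x y
    using assms(7) that unfolding clique_def by blast
  have pair: "\<exists>c w. c \<in> C \<and> {x, y} = {c, w} \<and> w \<in> Nh V E c \<and> w \<noteq> c \<and> \<not> E c w \<and> w \<notin> C"
    if "x \<in> K" "y \<in> K" "x \<noteq> y" "\<not> E x y" for x y
  proof -
    have "\<exists>c\<in>C. (x = c \<and> y \<noteq> c \<and> y \<in> Nh V E c) \<or> (y = c \<and> x \<noteq> c \<and> x \<in> Nh V E c)"
      using HE[OF cl[OF that(1-3)]] that(4) by blast
    then obtain c where c: "c \<in> C" "(x = c \<and> y \<noteq> c \<and> y \<in> Nh V E c) \<or> (y = c \<and> x \<noteq> c \<and> x \<in> Nh V E c)"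
      by blast
    obtain w where cw: "c \<in> C" "{x, y} = {c, w}" "w \<in> Nh V E c" "w \<noteq> c"
    proof (cases "x = c \<and> y \<noteq> c \<and> y \<in> Nh V E c")
      case True
      then have "{x, y} = {c, y}" by simp
      then show ?thesis using that[of y] True c(1) by blast
    next
      case False
      then have "y = c \<and> x \<noteq> c \<and> x \<in> Nh V E c" using c(2) by blast
      then have "{x, y} = {c, x}" by (simp add: insert_commute)
      then show ?thesis using that[of x] \<open>y = c \<and> x \<noteq> c \<and> x \<in> Nh V E c\<close> c(1) by blast
    qed
    have "\<not> E c w" using cw that(4) graph_sym[OF g] by (auto simp: doubleton_eq_iff)
    moreover have "w \<notin> C" using NhC cw by blast
    ultimately show ?thesis using cw by blast
  qed
  obtain x y where xy: "x \<in> K" "y \<in> K" "x \<noteq> y" "\<not> E x y"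
    using assms(6,8) unfolding clique_def by blast
  obtain c w where cw: "c \<in> C" "{x, y} = {c, w}" "w \<in> Nh V E c" "w \<noteq> c" "\<not> E c w" "w \<notin> C"
    using pair[OF xy] by blast
  have cK: "c \<in> K" "w \<in> K" using cw(2) xy by (auto simp: doubleton_eq_iff)
  have "clique V E (K - {c})"
    unfolding clique_def
  proof (intro conjI ballI impI)
    show "K - {c} \<subseteq> V" using assms(6) by auto
    fix x' y' assume x': "x' \<in> K - {c}" and y': "y' \<in> K - {c}" and ne: "x' \<noteq> y'"
    show "E x' y'"
    proof (rule ccontr)
      assume ne': "\<not> E x' y'"
      obtain c' w' where cw': "c' \<in> C" "{x', y'} = {c', w'}" "w' \<in> Nh V E c'" "w' \<noteq> c'"
          "\<not> E c' w'" "w' \<notin> C"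
        using pair[of x' y'] x' y' ne ne' by blast
      have c'K: "c' \<in> K" "w' \<in> K" "c' \<noteq> c" "w' \<noteq> c"
        using cw'(2) x' y' by (auto simp: doubleton_eq_iff)
      have ncs: "\<And>H. hole V E H \<Longrightarrow> c \<in> H \<Longrightarrow> c' \<in> H \<Longrightarrow> False"
        using two[OF _ cw(1) cw'(1)] c'K(3) by blast
      have Ecc: "E c c'"
      proof -
        have "hat_edges V E us c c'" using cl[OF cK(1) c'K(1)] c'K(3) by simp
        then show ?thesis using HE[of c c'] NhC[OF cw(1) cw'(1)] NhC[OF cw'(1) cw(1)] c'K(3) by blast
      qed
      have c'w: "c' \<noteq> w" using Ecc cw(5) by auto
      have Ec'w: "E c' w"
      proof (rule ccontr)
        assume nE: "\<not> E c' w"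
        have "hat_edges V E us c' w" using cl[OF c'K(1) cK(2)] c'w by simp
        then have "w \<in> Nh V E c'" using HE[of c' w] nE cw(6) by blast
        then have wN: "w \<in> Nh V E c'" .
        show False using ncs by (rule lemB[OF g nc[OF cw(1)] nc[OF cw'(1)] Ecc cw(3) wN cw(5) nE])
      qed
      have cw'': "c \<noteq> w'" using c'K by auto
      have Ecw': "E c w'"
      proof (rule ccontr)
        assume nE: "\<not> E c w'"
        have "hat_edges V E us c w'" using cl[OF cK(1) c'K(2)] cw'' by simp
        then have wN': "w' \<in> Nh V E c" using HE[of c w'] nE cw'(6) by blast
        have Ec'c: "E c' c" using Ecc graph_sym[OF g] by blast
        have ncs': "\<And>H. hole V E H \<Longrightarrow> c' \<in> H \<Longrightarrow> c \<in> H \<Longrightarrow> False" using ncs by blast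
        show False using ncs' by (rule lemB[OF g nc[OF cw'(1)] nc[OF cw(1)] Ec'c cw'(3) wN' cw'(5) nE])
      qed
      have ww: "w \<noteq> w'" using Ec'w cw'(5) by auto
      have Eww: "E w w'"
      proof -
        have "hat_edges V E us w w'" using cl[OF cK(2) c'K(2)] ww by simp
        then show ?thesis using HE[of w w'] cw(6) cw'(6) by blast
      qed
      have ip: "ipath E [c', w, w']"
        by (rule ipath3[OF g c'w _ _ Ec'w Eww cw'(5)]) (use ww cw'(4) in auto)
      have "hole V E (insert c (set [c', w, w']))"
      proof (rule path_hole[OF g ip])
        show "set [c', w, w'] \<subseteq> V" using assms(6) c'K cK by auto
        show "c \<in> V" using assms(6) cK by auto
        show "c \<notin> set [c', w, w']" using c'K cw by auto
        show "E c (hd [c', w, w'])" "E c (last [c', w, w'])" using Ecc Ecw' by auto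
        fix i assume "0 < i" "i < length [c', w, w'] - 1"
        then have "i = 1" by simp
        then show "\<not> E c ([c', w, w'] ! i)" using cw(5) by simp
      qed (simp)
      then show False using ncs by auto
    qed
  qed
  then show ?thesis using cw(1) cK by blast
qed

end
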